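(* Let $k\ge 3$ and $\ell\ge 1$ be integers. For all integers $n$ with $$n\ge 2\frac{(\ell(k-1)+k)^4-1}{(\ell+1)(k-1)}-1,$$ we have $px_{k,\ell}(K_n)=2$.
   Context: All graphs are finite, simple and undirected. An edge-coloring of a graph may assign the same color to adjacent edges. A tree $T$ in an edge-colored graph is a proper tree if no two adjacent edges of $T$ receive the same color. For $S\subseteq V(G)$ with $|S|\ge 2$, an $S$-tree is a tree in $G$ containing all vertices of $S$. $S$-trees $T_1,\dots,T_\ell$ are internally disjoint if $E(T_i)\cap E(T_j)=\emptyset$ and $V(T_i)\cap V(T_j)=S$ for all $i\ne j$. For a connected graph $G$ of order $n$ and integers $k,\ell$ with $2\le k\le n$ and $1\le \ell\le \kappa_k(G)$ (where $\kappa_k(G)$ is the minimum, over all $k$-subsets $S$ of $V(G)$, of the maximum number of internally disjoint $S$-trees), the $(k,\ell)$-proper index $px_{k,\ell}(G)$ is the minimum number of colors in an edge-coloring of $G$ such that for every $k$-subset $S$ of $V(G)$ there exist $\ell$ internally disjoint proper $S$-trees. *)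

theory Defs
  imports Complex_Main
begin

definition is_graph :: "'a set \<Rightarrow> 'a set set \<Rightarrow> bool" where
  "is_graph V E \<longleftrightarrow> finite V \<and> (\<forall>e\<in>E. e \<subseteq> V \<and> card e = 2)"

definition complete_graph :: "nat \<Rightarrow> nat set \<times> nat set set" where
  "complete_graph n = ({..<n}, {e. e \<subseteq> {..<n} \<and> card e = 2})"

definition sub_connected :: "'a set \<Rightarrow> 'a set set \<Rightarrow> bool" where
  "sub_connected VT ET \<longleftrightarrow>
     (\<forall>u\<in>VT. \<forall>v\<in>VT. (\<lambda>x y. {x, y} \<in> ET)\<^sup>*\<^sup>* u v)"

definition has_cycle :: "'a set set \<Rightarrow> bool" where
  "has_cycle ET \<longleftrightarrow> (\<exists>vs. length vs \<ge> 3 \<and> distinct vs \<and>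
      (\<forall>i < length vs - 1. {vs ! i, vs ! Suc i} \<in> ET) \<and> {last vs, hd vs} \<in> ET)"

definition is_tree_in :: "'a set \<Rightarrow> 'a set set \<Rightarrow> 'a set \<Rightarrow> 'a set set \<Rightarrow> bool" where
  "is_tree_in V E VT ET \<longleftrightarrow> VT \<subseteq> V \<and> ET \<subseteq> E \<and> VT \<noteq> {} \<and>
     (\<forall>e\<in>ET. e \<subseteq> VT) \<and> sub_connected VT ET \<and> \<not> has_cycle ET"

definition proper_edges :: "('a set \<Rightarrow> nat) \<Rightarrow> 'a set set \<Rightarrow> bool" where
  "proper_edges c ET \<longleftrightarrow> (\<forall>e\<in>ET. \<forall>f\<in>ET. e \<noteq> f \<and> e \<inter> f \<noteq> {} \<longrightarrow> c e \<noteq> c f)"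

definition proper_S_tree :: "'a set \<Rightarrow> 'a set set \<Rightarrow> ('a set \<Rightarrow> nat) \<Rightarrow> 'a set
     \<Rightarrow> 'a set \<times> 'a set set \<Rightarrow> bool" where
  "proper_S_tree V E c S T \<longleftrightarrow> is_tree_in V E (fst T) (snd T) \<and> S \<subseteq> fst T \<and>
     proper_edges c (snd T)"

definition has_disjoint_proper_S_trees :: "'a set \<Rightarrow> 'a set set \<Rightarrow> ('a set \<Rightarrow> nat)
     \<Rightarrow> 'a set \<Rightarrow> nat \<Rightarrow> bool" where
  "has_disjoint_proper_S_trees V E c S l \<longleftrightarrow>
     (\<exists>T :: nat \<Rightarrow> 'a set \<times> 'a set set.
        (\<forall>i<l. proper_S_tree V E c S (T i)) \<and>
        (\<forall>i<l. \<forall>j<l. i \<noteq> j \<longrightarrow> snd (T i) \<inter> snd (T j) = {} \<and> fst (T i) \<inter> fst (T j) = S))"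

definition kl_proper_colouring :: "'a set \<Rightarrow> 'a set set \<Rightarrow> nat \<Rightarrow> nat \<Rightarrow> nat
     \<Rightarrow> ('a set \<Rightarrow> nat) \<Rightarrow> bool" where
  "kl_proper_colouring V E k l m c \<longleftrightarrow> (\<forall>e\<in>E. c e < m) \<and>
     (\<forall>S. S \<subseteq> V \<and> card S = k \<longrightarrow> has_disjoint_proper_S_trees V E c S l)"

definition px :: "'a set \<Rightarrow> 'a set set \<Rightarrow> nat \<Rightarrow> nat \<Rightarrow> nat" where
  "px V E k l = (LEAST m. \<exists>c. kl_proper_colouring V E k l m c)"

end

theory Submission
  imports Defs
begin


definition pedges :: "(nat \<Rightarrow> 'a) \<Rightarrow> nat \<Rightarrow> 'a set set" where
  "pedges p L = {{p j, p (Suc j)} | j. Suc j < L}"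

lemma edge_pos:
  assumes inj: "inj_on p {..<L}" and e: "{a,b} \<in> pedges p L" and i: "i < L" "p i = a"
  shows "\<exists>j<L. p j = b \<and> (j = Suc i \<or> i = Suc j)"
proof -
  obtain j where j: "Suc j < L" "{a,b} = {p j, p (Suc j)}" using e unfolding pedges_def by blast
  from j(2) have "(a = p j \<and> b = p (Suc j)) \<or> (a = p (Suc j) \<and> b = p j)"
    by (auto simp: doubleton_eq_iff)
  then show ?thesis
  proof
    assume h: "a = p j \<and> b = p (Suc j)"
    then have "i = j" using inj i j(1) by (auto dest: inj_onD)
    then show ?thesis using h j(1) by auto
  next
    assume h: "a = p (Suc j) \<and> b = p j"
    then have "i = Suc j" using inj i j(1) by (auto dest: inj_onD)
    then show ?thesis using h j(1) by (intro exI[of _ j]) auto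
  qed
qed

lemma pedges_mem: "x \<in> e \<Longrightarrow> e \<in> pedges p L \<Longrightarrow> x \<in> p ` {..<L}"
  unfolding pedges_def by auto

lemma path_no_cycle:
  assumes inj: "inj_on p {..<L}"
  shows "\<not> has_cycle (pedges p L)"
proof
  assume "has_cycle (pedges p L)"
  then obtain vs where len: "length vs \<ge> 3" and dist: "distinct vs"
    and cons: "\<forall>i < length vs - 1. {vs ! i, vs ! Suc i} \<in> pedges p L"
    and cl: "{last vs, hd vs} \<in> pedges p L" unfolding has_cycle_def by blast
  have hd: "hd vs = vs ! 0" using len by (cases vs) auto
  have lst: "last vs = vs ! (length vs - 1)" using len by (cases vs rule: rev_cases) auto
  have inimg: "x \<in> p ` {..<L}" if "x \<in> set vs" for x
  proof -
    obtain i where i: "i < length vs" "x = vs ! i" using \<open>x \<in> set vs\<close> by (auto simp: in_set_conv_nth)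
    show ?thesis
    proof (cases "i < length vs - 1")
      case True then show ?thesis using cons i by (intro pedges_mem[of x "{vs ! i, vs ! Suc i}"]) auto
    next
      case False then have "i = length vs - 1" using i by linarith
      then have "x = last vs" using i lst by simp
      then show ?thesis using cl by (intro pedges_mem[of x "{last vs, hd vs}"]) auto
    qed
  qed
  have ex: "\<exists>i. i < L \<and> p i \<in> set vs"
  proof -
    have "0 < length vs" using len by linarith
    then have "vs ! 0 \<in> set vs" by (rule nth_mem)
    moreover from inimg[OF this] obtain i where "i \<in> {..<L}" "vs ! 0 = p i" by (rule imageE)
    ultimately show ?thesis by (intro exI[of _ i]) auto
  qed
  define i0 where "i0 = (LEAST i. i < L \<and> p i \<in> set vs)"
  have i0: "i0 < L" "p i0 \<in> set vs" using LeastI_ex[OF ex] unfolding i0_def by auto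
  have key: "w = p (Suc i0)" if wv: "w \<in> set vs" and we: "{p i0, w} \<in> pedges p L" for w
  proof -
    obtain j where j: "j < L" "p j = w" "j = Suc i0 \<or> i0 = Suc j"
      using edge_pos[OF inj we i0(1) refl] by blast
    have "\<not> (i0 = Suc j)"
    proof
      assume "i0 = Suc j"
      then have "j < i0" by simp
      moreover have "j < L \<and> p j \<in> set vs" using j wv by simp
      ultimately show False using not_less_Least[of j "\<lambda>i. i < L \<and> p i \<in> set vs"] unfolding i0_def by blast
    qed
    then show ?thesis using j by auto
  qed
  obtain q where q: "q < length vs" "p i0 = vs ! q" using i0(2) by (auto simp: in_set_conv_nth)
  have L0: "0 < length vs" using len by linarith
  have key2: "vs ! a = p (Suc i0)" if "a < length vs" "{vs ! a, vs ! q} \<in> pedges p L" for a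
    using key[of "vs ! a"] that q by (simp add: insert_commute)
  show False
  proof (cases "q = 0")
    case True
    have "0 < length vs - 1" using len by simp
    then have "{vs ! 0, vs ! Suc 0} \<in> pedges p L" using cons by blast
    then have a: "vs ! 1 = p (Suc i0)" using key2[of 1] len True by (simp add: insert_commute)
    have b: "vs ! (length vs - 1) = p (Suc i0)" using key2[of "length vs - 1"] cl hd lst True L0 by simp
    have "vs ! 1 \<noteq> vs ! (length vs - 1)" using dist len by (simp add: nth_eq_iff_index_eq)
    then show False using a b by simp
  next
    case False
    note qpos = False
    show ?thesis
    proof (cases "q = length vs - 1")
      case True
      have "{vs ! (q-1), vs ! Suc (q-1)} \<in> pedges p L" using cons True qpos len by auto
      then have "{vs ! (q-1), vs ! q} \<in> pedges p L" using qpos by simp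
      then have a: "vs ! (q-1) = p (Suc i0)" using key2[of "q-1"] q by simp
      have b: "vs ! 0 = p (Suc i0)" using key2[of 0] cl hd lst True L0 by (simp add: insert_commute)
      have "q - 1 < length vs" "q - 1 \<noteq> 0" using len True by auto
      then have "vs ! (q-1) \<noteq> vs ! 0" using nth_eq_iff_index_eq[OF dist, of "q-1" 0] L0 by simp
      then show False using a b by simp
    next
      case False
      have "q - 1 < length vs - 1" using False qpos q by linarith
      then have "{vs ! (q-1), vs ! Suc (q-1)} \<in> pedges p L" using cons by blast
      then have "{vs ! (q-1), vs ! q} \<in> pedges p L" using qpos by simp
      then have a: "vs ! (q-1) = p (Suc i0)" using key2[of "q-1"] q by simp
      have "q < length vs - 1" using False q by linarith
      then have "{vs ! q, vs ! Suc q} \<in> pedges p L" using cons by blast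
      then have b: "vs ! Suc q = p (Suc i0)" using key2[of "Suc q"] q False by (simp add: insert_commute)
      have "vs ! (q-1) \<noteq> vs ! Suc q" using dist q False by (simp add: nth_eq_iff_index_eq)
      then show False using a b by simp
    qed
  qed
qed

lemma path_connected:
  shows "sub_connected (p ` {..<L}) (pedges p L)"
proof -
  let ?R = "\<lambda>x y. {x, y} \<in> pedges p L"
  have fw: "?R\<^sup>*\<^sup>* (p 0) (p j) \<and> ?R\<^sup>*\<^sup>* (p j) (p 0)" if "j < L" for j
    using that
  proof (induction j)
    case 0 then show ?case by simp
  next
    case (Suc j)
    have e: "?R (p j) (p (Suc j))" using Suc.prems unfolding pedges_def by blast
    have e2: "?R (p (Suc j)) (p j)" using e by (simp add: insert_commute)
    from Suc have ih: "?R\<^sup>*\<^sup>* (p 0) (p j) \<and> ?R\<^sup>*\<^sup>* (p j) (p 0)" by simp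
    show ?case using ih e e2
      by (meson converse_rtranclp_into_rtranclp rtranclp.rtrancl_into_rtrancl)
  qed
  show ?thesis unfolding sub_connected_def
    using fw by (auto intro: rtranclp_trans)
qed

lemma path_is_tree:
  assumes inj: "inj_on p {..<L}" and L: "0 < L" and sub: "p ` {..<L} \<subseteq> V"
    and edges: "pedges p L \<subseteq> E"
  shows "is_tree_in V E (p ` {..<L}) (pedges p L)"
proof -
  have ne: "p ` {..<L} \<noteq> {}" using L by auto
  have es: "\<forall>e\<in>pedges p L. e \<subseteq> p ` {..<L}" unfolding pedges_def by auto
  show ?thesis unfolding is_tree_in_def
  proof (intro conjI)
    show "\<not> has_cycle (pedges p L)" by (rule path_no_cycle[OF inj])
    show "sub_connected (p ` {..<L}) (pedges p L)" by (rule path_connected)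
  qed (fact sub edges ne es)+
qed

lemma mod2_eq: "((x::nat) mod 2 = y mod 2) = (even x = even y)"
  by (metis even_iff_mod_2_eq_zero odd_iff_mod_2_eq_one)
lemma par_lemma: "(a::nat) mod 2 = (j div 2) mod 2 \<Longrightarrow> c mod 2 = (Suc (Suc j) div 2) mod 2 \<Longrightarrow> (a+b) mod 2 \<noteq> (b+c) mod 2"
  unfolding mod2_eq by auto

lemma path_proper:
  assumes inj: "inj_on p {..<L}" and par: "\<forall>j<L. p j mod 2 = (j div 2) mod 2"
  shows "proper_edges (\<lambda>e. (\<Sum>e) mod 2) (pedges p L)"
  unfolding proper_edges_def
proof (intro ballI impI)
  fix e f assume ef: "e \<in> pedges p L" "f \<in> pedges p L" "e \<noteq> f \<and> e \<inter> f \<noteq> {}"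
  obtain j where j: "Suc j < L" "e = {p j, p (Suc j)}" using ef(1) unfolding pedges_def by blast
  obtain j' where j': "Suc j' < L" "f = {p j', p (Suc j')}" using ef(2) unfolding pedges_def by blast
  have ij: "x = y" if "x < L" "y < L" "p x = p y" for x y using inj that by (auto dest: inj_onD)
  have ne: "p x \<noteq> p (Suc x)" if "Suc x < L" for x using ij[of x "Suc x"] that by auto
  have sm: "\<Sum>{p x, p (Suc x)} = p x + p (Suc x)" if "Suc x < L" for x using ne[OF that] by simp
  have "j' = Suc j \<or> j = Suc j'"
  proof -
    obtain z where z: "z \<in> e" "z \<in> f" using ef(3) by blast
    have z1: "z = p j \<or> z = p (Suc j)" using z(1) j(2) by blast
    have z2: "z = p j' \<or> z = p (Suc j')" using z(2) j'(2) by blast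
    have jl: "j < L" "j' < L" using j(1) j'(1) by auto
    have "j = j' \<or> j = Suc j' \<or> Suc j = j' \<or> Suc j = Suc j'"
      using z1 z2
    proof (elim disjE)
      assume "z = p j" "z = p j'" then show ?thesis using ij[OF jl(1) jl(2)] by simp
    next
      assume "z = p j" "z = p (Suc j')" then show ?thesis using ij[OF jl(1) j'(1)] by simp
    next
      assume "z = p (Suc j)" "z = p j'" then show ?thesis using ij[OF j(1) jl(2)] by simp
    next
      assume "z = p (Suc j)" "z = p (Suc j')" then show ?thesis using ij[OF j(1) j'(1)] by simp
    qed
    moreover have "j \<noteq> j'" using ef(3) j(2) j'(2) by auto
    ultimately show ?thesis by auto
  qed
  then show "(\<Sum>e) mod 2 \<noteq> (\<Sum>f) mod 2"
  proof
    assume h: "j' = Suc j"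
    have jL: "j < L" using j(1) by simp
    have p1: "p j mod 2 = (j div 2) mod 2" using par[rule_format, OF jL] .
    have jL2: "Suc (Suc j) < L" using j'(1) unfolding h .
    have p2: "p (Suc (Suc j)) mod 2 = (Suc (Suc j) div 2) mod 2" using par[rule_format, OF jL2] .
    have ff: "f = {p (Suc j), p (Suc (Suc j))}" using j'(2) unfolding h .
    have "\<Sum>f = p (Suc j) + p (Suc (Suc j))" unfolding ff using sm[OF jL2] .
    moreover have "\<Sum>e = p j + p (Suc j)" unfolding j(2) using sm[OF j(1)] .
    ultimately show ?thesis using par_lemma[OF p1 p2, of "p (Suc j)"] by simp
  next
    assume h: "j = Suc j'"
    have jL: "j' < L" using j'(1) by simp
    have p1: "p j' mod 2 = (j' div 2) mod 2" using par[rule_format, OF jL] .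
    have jL2: "Suc (Suc j') < L" using j(1) unfolding h .
    have p2: "p (Suc (Suc j')) mod 2 = (Suc (Suc j') div 2) mod 2" using par[rule_format, OF jL2] .
    have ee: "e = {p (Suc j'), p (Suc (Suc j'))}" using j(2) unfolding h .
    have "\<Sum>e = p (Suc j') + p (Suc (Suc j'))" unfolding ee using sm[OF jL2] .
    moreover have "\<Sum>f = p j' + p (Suc j')" unfolding j'(2) using sm[OF j'(1)] .
    ultimately show ?thesis using par_lemma[OF p1 p2, of "p (Suc j')"] by simp
  qed
qed



lemma real_bound:
  fixes k l n :: nat
  assumes "k \<ge> 3" and "l \<ge> 1"
    and h: "real n \<ge> 2 * ((real l * (real k - 1) + real k) ^ 4 - 1)
                    / ((real l + 1) * (real k - 1)) - 1"
  shows "8 * k * l + 2 * k \<le> n"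
proof -
  define M where "M = real l * (real k - 1) + real k"
  have k3: "real k \<ge> 3" using assms(1) by simp
  have l0: "real l \<ge> 0" by simp
  have D: "(real l + 1) * (real k - 1) = M - 1" unfolding M_def by (simp add: algebra_simps)
  have lk: "real l * real k \<ge> real l * 3" using k3 l0 by (rule mult_left_mono)
  have "real l * (real k - 1) \<ge> 0" using k3 l0 by (intro mult_nonneg_nonneg) auto
  then have M3: "M \<ge> 3" unfolding M_def using k3 by linarith
  have f: "M ^ 4 - 1 = (M - 1) * (M^3 + M^2 + M + 1)" by (simp add: algebra_simps power_def)
  have q: "(M ^ 4 - 1) / (M - 1) = M^3 + M^2 + M + 1" using f M3 by simp
  have h2: "real n \<ge> 2 * ((M ^ 4 - 1) / (M - 1)) - 1" using h unfolding D M_def[symmetric] by simp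
  have hn: "real n \<ge> 2 * (M^3 + M^2 + M + 1) - 1" using h2 unfolding q .
  have "M * M \<ge> 3 * 3" using M3 by (intro mult_mono) auto
  then have M2: "M^2 \<ge> 9" by (simp add: power2_eq_square)
  have "M^3 = M * M^2" by (simp add: power_def)
  also have "\<dots> \<ge> M * 9" using M2 M3 by (intro mult_left_mono) auto
  finally have M3b: "M^3 \<ge> 9 * M" by simp
  have "M^2 \<ge> 0" by simp
  have ex: "2*(M^3+M^2+M+1) - 1 = 2*M^3 + 2*M^2 + 2*M + 1" by (simp add: algebra_simps)
  have "real n \<ge> 18 * M" using hn M3b \<open>M^2 \<ge> 0\<close> M3 unfolding ex by linarith
  moreover have "18 * M \<ge> 8 * real k * real l + 2 * real k"
    unfolding M_def using lk l0 k3 by (simp add: algebra_simps)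
  ultimately have "real (8 * k * l + 2 * k) \<le> real n" by simp
  then show ?thesis by linarith
qed



lemma card_parity:
  fixes q n :: nat assumes "q < 2"
  shows "n div 2 \<le> card {x. x < n \<and> x mod 2 = q}"
proof -
  have inj: "inj_on (\<lambda>i. 2*i+q) {..<n div 2}" by (auto simp: inj_on_def)
  have sub: "(\<lambda>i. 2*i+q) ` {..<n div 2} \<subseteq> {x. x < n \<and> x mod 2 = q}"
  proof
    fix x assume "x \<in> (\<lambda>i. 2*i+q) ` {..<n div 2}"
    then obtain i where i: "i < n div 2" "x = 2*i+q" by auto
    have "2*i + 2 \<le> n" using i(1) by linarith
    then show "x \<in> {x. x < n \<and> x mod 2 = q}" using i assms by auto
  qed
  have "card ((\<lambda>i. 2*i+q) ` {..<n div 2}) \<le> card {x. x < n \<and> x mod 2 = q}"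
    by (rule card_mono[OF _ sub]) auto
  then show ?thesis using card_image[OF inj] by simp
qed

lemma card_R:
  fixes q n :: nat assumes "q < 2" "finite S" "card S = k" "N + k \<le> n div 2"
  shows "N \<le> card {x. x < n \<and> x mod 2 = q \<and> x \<notin> S}"
proof -
  have eq: "{x. x < n \<and> x mod 2 = q \<and> x \<notin> S} = {x. x < n \<and> x mod 2 = q} - S" by auto
  have "card {x. x < n \<and> x mod 2 = q} - card S \<le> card ({x. x < n \<and> x mod 2 = q} - S)"
    by (rule diff_card_le_card_Diff) (rule assms(2))
  then show ?thesis unfolding eq using card_parity[OF assms(1), of n] assms(3,4) by linarith
qed

lemma get_inj:
  assumes "finite A" "N \<le> card A"
  shows "\<exists>f. inj_on f {..<N} \<and> f ` {..<N} \<subseteq> A"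
  using card_le_inj[of "{..<N}" A] assms by auto

lemma divmod_uniq:
  fixes t t' j j' L :: nat
  assumes "j < L" "j' < L" "t*L+j = t'*L+j'"
  shows "t = t' \<and> j = j'"
proof -
  have a: "(t*L+j) div L = t" using assms(1) by simp
  have b: "(t'*L+j') div L = t'" using assms(2) by simp
  have "t = t'" using a b assms(3) by simp
  then show ?thesis using assms(3) by simp
qed

lemma idx_lt:
  fixes t l j L :: nat
  assumes "t < l" "j < L" shows "t*L+j < l*L"
proof -
  have "t*L + j < t*L + L" using assms by simp
  also have "\<dots> = Suc t * L" by simp
  also have "\<dots> \<le> l * L" using assms(1) by (intro mult_right_mono) auto
  finally show ?thesis .
qed

lemma mod4: "((j::nat) div 2) mod 2 = (j mod 4) div 2"
proof -
  define a r where "a = j div 4" and "r = j mod 4"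
  have j: "j = r + 2 * (2 * a)" unfolding a_def r_def by simp
  have r4: "r < 4" unfolding r_def by simp
  have "j div 2 = r div 2 + 2 * a" unfolding j by simp
  then have "(j div 2) mod 2 = (r div 2) mod 2" by simp
  also have "\<dots> = r div 2" using r4 by simp
  finally show ?thesis unfolding r_def .
qed

lemma mod4_even: "(j::nat) mod 4 = 0 \<or> j mod 4 = 2 \<Longrightarrow> even j"
proof -
  assume "j mod 4 = 0 \<or> j mod 4 = 2"
  moreover have "j mod 2 = (j mod 4) mod 2" by (simp add: mod_mod_cancel)
  ultimately show ?thesis by auto
qed

lemma construct:
  fixes n k l :: nat and S :: "nat set"
  assumes k1: "k \<ge> 1" and Ssub: "S \<subseteq> {..<n}" and cS: "card S = k" and big: "8*k*l + 2*k \<le> n"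
  shows "has_disjoint_proper_S_trees {..<n} {e. e \<subseteq> {..<n} \<and> card e = 2} (\<lambda>e. (\<Sum>e) mod 2) S l"
proof -
  have finS: "finite S" using Ssub finite_subset by blast
  define ss where "ss = sorted_list_of_set S"
  have ss: "distinct ss" "set ss = S" "length ss = k" unfolding ss_def using finS cS by auto
  define L where "L = 4 * k"
  have L0: "0 < L" unfolding L_def using k1 by simp
  define R where "R q = {x. x < n \<and> x mod 2 = q \<and> x \<notin> S}" for q :: nat
  have cR: "l * L \<le> card (R q)" if "q < 2" for q
  proof -
    have "2*(l*L+k) \<le> n" using big unfolding L_def by (simp add: algebra_simps)
    then have "(2*(l*L+k)) div 2 \<le> n div 2" by (rule div_le_mono)
    then have "l * L + k \<le> n div 2" by simp
    then show ?thesis unfolding R_def using card_R[OF that finS cS] by blast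
  qed
  have fR: "finite (R q)" for q unfolding R_def by simp
  obtain f0 where f0: "inj_on f0 {..<l*L}" "f0 ` {..<l*L} \<subseteq> R 0"
    using get_inj[OF fR cR[of 0]] by auto
  obtain f1 where f1: "inj_on f1 {..<l*L}" "f1 ` {..<l*L} \<subseteq> R 1"
    using get_inj[OF fR cR[of 1]] by auto
  define E where "E t j = (if (j div 2) mod 2 = 0 then f0 else f1) (t*L+j)" for t j
  have Eprops: "E t j < n \<and> E t j \<notin> S \<and> E t j mod 2 = (j div 2) mod 2" if "t < l" "j < L" for t j
  proof -
    have i: "t*L+j \<in> {..<l*L}" using idx_lt[OF that] by simp
    show ?thesis
    proof (cases "(j div 2) mod 2 = 0")
      case True
      then have "E t j = f0 (t*L+j)" unfolding E_def by simp
      moreover have "f0 (t*L+j) \<in> R 0" using f0(2) i by blast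
      ultimately show ?thesis using True unfolding R_def by simp
    next
      case False
      then have F: "(j div 2) mod 2 = 1" by simp
      then have "E t j = f1 (t*L+j)" unfolding E_def by simp
      moreover have "f1 (t*L+j) \<in> R 1" using f1(2) i by blast
      ultimately show ?thesis using F unfolding R_def by simp
    qed
  qed
  have Einj: "t = t' \<and> j = j'" if "t < l" "t' < l" "j < L" "j' < L" "E t j = E t' j'" for t t' j j'
  proof -
    have i: "t*L+j \<in> {..<l*L}" "t'*L+j' \<in> {..<l*L}" using idx_lt that by auto
    have e1: "E t j mod 2 = (j div 2) mod 2" using Eprops[OF that(1) that(3)] by simp
    have e2: "E t' j' mod 2 = (j' div 2) mod 2" using Eprops[OF that(2) that(4)] by simp
    have par: "(j div 2) mod 2 = (j' div 2) mod 2" using e1 e2 that(5) by simp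
    have "t*L+j = t'*L+j'"
    proof (cases "(j div 2) mod 2 = 0")
      case True
      then have "f0 (t*L+j) = f0 (t'*L+j')" using that(5) par unfolding E_def by simp
      then show ?thesis using f0(1) i by (auto dest: inj_onD)
    next
      case False
      then have "f1 (t*L+j) = f1 (t'*L+j')" using that(5) par unfolding E_def by simp
      then show ?thesis using f1(1) i by (auto dest: inj_onD)
    qed
    then show ?thesis using divmod_uniq that(3,4) by blast
  qed
  define place where "place i = (if even (ss ! i) then 0 else (2::nat))" for i
  define P where "P t j = (if j mod 4 = place (j div 4) then ss ! (j div 4) else E t j)" for t j
  have divk: "j div 4 < k" if "j < L" for j using that unfolding L_def by simp
  have Pcases: "(j mod 4 = place (j div 4) \<and> P t j = ss ! (j div 4) \<and> P t j \<in> S) \<or> (P t j = E t j)"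
    if "j < L" for t j
    using divk[OF that] ss unfolding P_def by auto
  have Ppar: "P t j mod 2 = (j div 2) mod 2" if "t < l" "j < L" for t j
  proof (cases "j mod 4 = place (j div 4)")
    case True
    then have Pj: "P t j = ss ! (j div 4)" unfolding P_def by simp
    show ?thesis
    proof (cases "even (ss ! (j div 4))")
      case True
      then have "j mod 4 = 0" using \<open>j mod 4 = place (j div 4)\<close> unfolding place_def by simp
      then show ?thesis using Pj True mod4[of j] by simp
    next
      case False
      then have "j mod 4 = 2" using \<open>j mod 4 = place (j div 4)\<close> unfolding place_def by simp
      then show ?thesis using Pj False mod4[of j] by (simp add: odd_iff_mod_2_eq_one)
    qed
  next
    case False
    then show ?thesis using Eprops[OF that] unfolding P_def by simp
  qed
  have Plt: "P t j < n" if "t < l" "j < L" for t j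
    using Pcases[OF that(2), of t] Eprops[OF that] Ssub by auto
  have Pinj: "inj_on (P t) {..<L}" if "t < l" for t
  proof (rule inj_onI)
    fix j j' assume jj: "j \<in> {..<L}" "j' \<in> {..<L}" "P t j = P t j'"
    have jl: "j < L" "j' < L" using jj by auto
    show "j = j'"
    proof (cases "j mod 4 = place (j div 4)")
      case A: True
      show ?thesis
      proof (cases "j' mod 4 = place (j' div 4)")
        case B: True
        have "ss ! (j div 4) = ss ! (j' div 4)" using jj(3) A B unfolding P_def by simp
        moreover have "j div 4 < length ss" "j' div 4 < length ss" using divk jl ss(3) by auto
        ultimately have d: "j div 4 = j' div 4" using nth_eq_iff_index_eq[OF ss(1)] by blast
        then have m: "j mod 4 = j' mod 4" using A B by simp
        have "j = 4 * (j div 4) + j mod 4" "j' = 4 * (j' div 4) + j' mod 4" by simp_all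
        then show ?thesis using d m by simp
      next
        case B: False
        have "P t j' = E t j'" using B unfolding P_def by simp
        moreover have "P t j \<in> S" using A divk[OF jl(1)] ss unfolding P_def by auto
        ultimately show ?thesis using Eprops[OF that jl(2)] jj(3) by simp
      qed
    next
      case A: False
      have PA: "P t j = E t j" using A unfolding P_def by simp
      show ?thesis
      proof (cases "j' mod 4 = place (j' div 4)")
        case B: True
        have "P t j' \<in> S" using B divk[OF jl(2)] ss unfolding P_def by auto
        then show ?thesis using Eprops[OF that jl(1)] jj(3) PA by simp
      next
        case B: False
        have "P t j' = E t j'" using B unfolding P_def by simp
        then show ?thesis using Einj[OF that that jl] jj(3) PA by simp
      qed
    qed
  qed
  have Ssub_img: "S \<subseteq> P t ` {..<L}" for t
  proof
    fix s assume "s \<in> S"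
    then obtain i where i: "i < k" "s = ss ! i" using ss by (auto simp: in_set_conv_nth)
    define j where "j = 4 * i + place i"
    have pl: "place i < 4" unfolding place_def by simp
    have jd: "j div 4 = i" unfolding j_def using pl by simp
    have jm: "j mod 4 = place i" unfolding j_def using pl by simp
    have "j < L" unfolding j_def L_def using i(1) pl unfolding place_def by auto
    moreover have "P t j = s" unfolding P_def using jd jm i by simp
    ultimately show "s \<in> P t ` {..<L}" by blast
  qed
  have oddE: "P t j = E t j" if "odd j" for t j
  proof -
    have "j mod 4 \<noteq> place (j div 4)"
    proof
      assume "j mod 4 = place (j div 4)"
      then have "j mod 4 = 0 \<or> j mod 4 = 2" unfolding place_def by (auto split: if_splits)
      then have "even j" by (rule mod4_even)
      then show False using that by simp
    qed
    then show ?thesis unfolding P_def by simp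
  qed
  define T where "T t = (P t ` {..<L}, pedges (P t) L)" for t
  have tree: "proper_S_tree {..<n} {e. e \<subseteq> {..<n} \<and> card e = 2} (\<lambda>e. (\<Sum>e) mod 2) S (T t)"
    if "t < l" for t
  proof -
    have sub: "P t ` {..<L} \<subseteq> {..<n}" using Plt[OF that] by auto
    have ed: "pedges (P t) L \<subseteq> {e. e \<subseteq> {..<n} \<and> card e = 2}"
    proof
      fix e assume "e \<in> pedges (P t) L"
      then obtain j where j: "Suc j < L" "e = {P t j, P t (Suc j)}" unfolding pedges_def by blast
      have "P t j \<noteq> P t (Suc j)" using inj_onD[OF Pinj[OF that], of j "Suc j"] j(1) by auto
      then show "e \<in> {e. e \<subseteq> {..<n} \<and> card e = 2}" using j Plt[OF that, of j] Plt[OF that, of "Suc j"] by auto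
    qed
    have pp: "proper_edges (\<lambda>e. (\<Sum>e) mod 2) (pedges (P t) L)"
      using path_proper[OF Pinj[OF that]] Ppar[OF that] by blast
    show ?thesis unfolding proper_S_tree_def T_def fst_conv snd_conv
      using path_is_tree[OF Pinj[OF that] L0 sub ed] Ssub_img[of t] pp by (intro conjI)
  qed
  have disj: "snd (T t) \<inter> snd (T t') = {} \<and> fst (T t) \<inter> fst (T t') = S"
    if tt: "t < l" "t' < l" "t \<noteq> t'" for t t'
  proof
    show "snd (T t) \<inter> snd (T t') = {}"
    proof (rule ccontr)
      assume "snd (T t) \<inter> snd (T t') \<noteq> {}"
      then obtain e where e: "e \<in> pedges (P t) L" "e \<in> pedges (P t') L" unfolding T_def by auto
      obtain j where j: "Suc j < L" "e = {P t j, P t (Suc j)}" using e(1) unfolding pedges_def by blast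
      obtain j' where j': "Suc j' < L" "e = {P t' j', P t' (Suc j')}" using e(2) unfolding pedges_def by blast
      define jo where "jo = (if odd j then j else Suc j)"
      have oo: "odd jo" "jo < L" "P t jo \<in> e" unfolding jo_def using j by auto
      have Eo: "P t jo = E t jo" using oddE[OF oo(1)] .
      have EoS: "E t jo \<notin> S" using Eprops[OF tt(1) oo(2)] by simp
      have "P t jo = P t' j' \<or> P t jo = P t' (Suc j')" using oo(3) unfolding j'(2) by simp
      then obtain y where y: "y < L" "P t' y = E t jo"
      proof
        assume "P t jo = P t' j'" then show ?thesis using that[of j'] j'(1) Eo by simp
      next
        assume "P t jo = P t' (Suc j')" then show ?thesis using that[of "Suc j'"] j'(1) Eo by simp
      qed
      have "P t' y \<notin> S" using y(2) EoS by simp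
      then have "P t' y = E t' y" using Pcases[OF y(1), of t'] by blast
      then have "E t' y = E t jo" using y(2) by simp
      then have "t' = t" using Einj[OF tt(2) tt(1) y(1) oo(2)] by blast
      then show False using tt(3) by simp
    qed
  next
    show "fst (T t) \<inter> fst (T t') = S"
    proof
      show "S \<subseteq> fst (T t) \<inter> fst (T t')" unfolding T_def using Ssub_img by auto
      show "fst (T t) \<inter> fst (T t') \<subseteq> S"
      proof
        fix x assume "x \<in> fst (T t) \<inter> fst (T t')"
        then obtain j j' where jj: "j < L" "j' < L" "x = P t j" "x = P t' j'" unfolding T_def by auto
        show "x \<in> S"
        proof (rule ccontr)
          assume xS: "x \<notin> S"
          have "x = E t j" using Pcases[OF jj(1), of t] jj(3) xS by auto
          moreover have "x = E t' j'" using Pcases[OF jj(2), of t'] jj(4) xS by auto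
          ultimately have "t = t'" using Einj[OF tt(1) tt(2) jj(1) jj(2)] by simp
          then show False using tt(3) by simp
        qed
      qed
    qed
  qed
  show ?thesis unfolding has_disjoint_proper_S_trees_def
    by (rule exI[of _ T]) (use tree disj in blast)
qed



lemma no_one_colour:
  fixes n k l m :: nat and c :: "nat set \<Rightarrow> nat"
  assumes k3: "k \<ge> 3" and kn: "k \<le> n" and l1: "l \<ge> 1"
    and col: "kl_proper_colouring {..<n} {e. e \<subseteq> {..<n} \<and> card e = 2} k l m c"
  shows "2 \<le> m"
proof (rule ccontr)
  assume "\<not> 2 \<le> m"
  then have m1: "m \<le> 1" by simp
  define S where "S = {..<k}"
  have S: "S \<subseteq> {..<n}" "card S = k" unfolding S_def using kn by auto
  have cl: "\<forall>e\<in>{e. e \<subseteq> {..<n} \<and> card e = 2}. c e < m" and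
    tr: "has_disjoint_proper_S_trees {..<n} {e. e \<subseteq> {..<n} \<and> card e = 2} c S l"
    using col S unfolding kl_proper_colouring_def by auto
  obtain T where T: "\<forall>i<l. proper_S_tree {..<n} {e. e \<subseteq> {..<n} \<and> card e = 2} c S (T i)"
    using tr unfolding has_disjoint_proper_S_trees_def by blast
  have T0: "proper_S_tree {..<n} {e. e \<subseteq> {..<n} \<and> card e = 2} c S (T 0)" using T l1 by simp
  obtain VT ET where VE: "T 0 = (VT, ET)" by fastforce
  have tree: "is_tree_in {..<n} {e. e \<subseteq> {..<n} \<and> card e = 2} VT ET" and SV: "S \<subseteq> VT"
    and pr: "proper_edges c ET" using T0 unfolding proper_S_tree_def VE by auto
  have ETE: "ET \<subseteq> {e. e \<subseteq> {..<n} \<and> card e = 2}" and conn: "sub_connected VT ET"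
    using tree unfolding is_tree_in_def by auto
  have c0: "c e = 0" if "e \<in> ET" for e
  proof -
    have "e \<in> {e. e \<subseteq> {..<n} \<and> card e = 2}" using ETE that by blast
    then have "c e < m" using cl by blast
    then show ?thesis using m1 by linarith
  qed
  have match: "e = f" if ef: "e \<in> ET" "f \<in> ET" "e \<inter> f \<noteq> {}" for e f
  proof (rule ccontr)
    assume "e \<noteq> f"
    then have "c e \<noteq> c f" using pr ef unfolding proper_edges_def by blast
    then show False using c0[OF ef(1)] c0[OF ef(2)] by simp
  qed
  let ?R = "\<lambda>x y. {x, y} \<in> ET"
  have S012: "0 \<in> VT" "1 \<in> VT" "2 \<in> VT" using SV k3 unfolding S_def by auto
  have r1: "?R\<^sup>*\<^sup>* 0 1" and r2: "?R\<^sup>*\<^sup>* 0 2" using conn S012 unfolding sub_connected_def by auto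
  have "\<exists>y. ?R 0 y"
    using r1
  proof (rule converse_rtranclpE)
    assume "(0::nat) = 1" then show ?thesis by simp
  next
    fix y assume "?R 0 y" then show ?thesis by (rule exI)
  qed
  then obtain y where y: "?R 0 y" by (rule exE)
  have comp: "z \<in> {0, y}" if "?R\<^sup>*\<^sup>* 0 z" for z
    using that
  proof (induction rule: rtranclp_induct)
    case base then show ?case by simp
  next
    case (step z w)
    have "z \<in> {z, w} \<inter> {0, y}" using step.IH by simp
    then have "{z, w} \<inter> {0, y} \<noteq> {}" by blast
    then have eq: "{z, w} = {0, y}" by (rule match[OF step.hyps(2) y])
    have "w \<in> {z, w}" by simp
    then show ?case unfolding eq .
  qed
  have "1 \<in> {0::nat, y}" using comp[OF r1] .
  moreover have "2 \<in> {0::nat, y}" using comp[OF r2] .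
  ultimately show False by auto
qed

theorem theorem2p9:
  fixes k l n :: nat
  assumes "k \<ge> 3" and "l \<ge> 1"
    and "real n \<ge> 2 * ((real l * (real k - 1) + real k) ^ 4 - 1)
                    / ((real l + 1) * (real k - 1)) - 1"
  shows "px (fst (complete_graph n)) (snd (complete_graph n)) k l = 2"
proof -
  have big: "8 * k * l + 2 * k \<le> n" using real_bound[OF assms] .
  have kn: "k \<le> n" using big by simp
  have G: "fst (complete_graph n) = {..<n}" "snd (complete_graph n) = {e. e \<subseteq> {..<n} \<and> card e = 2}"
    unfolding complete_graph_def by simp_all
  have up: "kl_proper_colouring {..<n} {e. e \<subseteq> {..<n} \<and> card e = 2} k l 2 (\<lambda>e. (\<Sum>e) mod 2)"
    unfolding kl_proper_colouring_def
  proof (intro conjI allI impI ballI)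
    fix e show "(\<Sum>e) mod 2 < (2::nat)" by simp
  next
    fix S :: "nat set" assume "S \<subseteq> {..<n} \<and> card S = k"
    then show "has_disjoint_proper_S_trees {..<n} {e. e \<subseteq> {..<n} \<and> card e = 2} (\<lambda>e. (\<Sum>e) mod 2) S l"
      using construct[of k S n l] assms(1) big by auto
  qed
  show ?thesis unfolding px_def G
  proof (rule Least_equality)
    show "\<exists>c. kl_proper_colouring {..<n} {e. e \<subseteq> {..<n} \<and> card e = 2} k l 2 c" using up by blast
  next
    fix m assume "\<exists>c. kl_proper_colouring {..<n} {e. e \<subseteq> {..<n} \<and> card e = 2} k l m c"
    then obtain c where "kl_proper_colouring {..<n} {e. e \<subseteq> {..<n} \<and> card e = 2} k l m c" by blast
    then show "2 \<le> m" using no_one_colour[OF assms(1) kn assms(2)] by blast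
  qed
qed

end
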